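(* Let $\rho$ be a density operator on $H$. Then for all $A\in\mathcal{A}$, $0\le\mu_\rho(A)\le\nu(A)$. Moreover, $\mu_\rho$ satisfies grade-2 additivity: $\mu_\rho(A\cup B\cup C)=\mu_\rho(A\cup B)+\mu_\rho(A\cup C)+\mu_\rho(B\cup C)-\mu_\rho(A)-\mu_\rho(B)-\mu_\rho(C)$ for mutually disjoint $A,B,C\in\mathcal{A}$; and $\mu_\rho$ is continuous: $\mu_\rho(A_i)\to\mu_\rho(\bigcup_i A_i)$ for every increasing sequence $A_1\subseteq A_2\subseteq\cdots$ in $\mathcal{A}$ and $\mu_\rho(B_i)\to\mu_\rho(\bigcap_i B_i)$ for every decreasing sequence $B_1\supseteq B_2\supseteq\cdots$ in $\mathcal{A}$.
   Context: $(\Omega,\mathcal{A},\nu)$ is a probability space and $H=L_2(\Omega,\mathcal{A},\nu)$ is the complex Hilbert space with inner product $\langle f,g\rangle=\int\bar f g\,d\nu$. For $A\in\mathcal{A}$, $\chi_A$ is its characteristic function and $\mu(A)=|\chi_A\rangle\langle\chi_A|$ is the operator $f\mapsto\left(\int_A f\,d\nu\right)\chi_A$ on $H$. A density operator is a positive trace-class operator of trace $1$. For a density operator $\rho$, the $q$-measure is $\mu_\rho(A)=\mathrm{tr}[\rho\mu(A)]$. *)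

theory Defs
  imports "HOL-Probability.Probability"
begin

text \<open>The Hilbert space H = L_2(Omega, A, nu) is represented by its square-integrable
  complex-valued representatives; elements are identified up to nu-a.e. equality.\<close>

definition L2 :: "'a measure \<Rightarrow> ('a \<Rightarrow> complex) set" where
  "L2 M = {f. f \<in> borel_measurable M \<and> integrable M (\<lambda>x. (cmod (f x))\<^sup>2)}"

definition ip :: "'a measure \<Rightarrow> ('a \<Rightarrow> complex) \<Rightarrow> ('a \<Rightarrow> complex) \<Rightarrow> complex" where
  "ip M f g = (LINT x|M. cnj (f x) * g x)"

definition onb :: "'a measure \<Rightarrow> ('a \<Rightarrow> complex) set \<Rightarrow> bool" where
  "onb M B \<longleftrightarrow> B \<subseteq> L2 M
     \<and> (\<forall>e\<in>B. ip M e e = 1)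
     \<and> (\<forall>e\<in>B. \<forall>e'\<in>B. e \<noteq> e' \<longrightarrow> ip M e e' = 0)
     \<and> (\<forall>f\<in>L2 M. (\<forall>e\<in>B. ip M e f = 0) \<longrightarrow> ip M f f = 0)"

definition is_operator :: "'a measure \<Rightarrow> (('a \<Rightarrow> complex) \<Rightarrow> ('a \<Rightarrow> complex)) \<Rightarrow> bool" where
  "is_operator M T \<longleftrightarrow>
     (\<forall>f\<in>L2 M. T f \<in> L2 M)
     \<and> (\<forall>f\<in>L2 M. \<forall>g\<in>L2 M. (AE x in M. f x = g x) \<longrightarrow> (AE x in M. T f x = T g x))
     \<and> (\<forall>f\<in>L2 M. \<forall>g\<in>L2 M. \<forall>c. AE x in M. T (\<lambda>y. c * f y + g y) x = c * T f x + T g x)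
     \<and> (\<exists>K. \<forall>f\<in>L2 M. Re (ip M (T f) (T f)) \<le> K * Re (ip M f f))"

definition positive_op :: "'a measure \<Rightarrow> (('a \<Rightarrow> complex) \<Rightarrow> ('a \<Rightarrow> complex)) \<Rightarrow> bool" where
  "positive_op M T \<longleftrightarrow> (\<forall>f\<in>L2 M. ip M f (T f) \<in> \<real> \<and> 0 \<le> Re (ip M f (T f)))"

text \<open>Trace: sum of diagonal entries in an orthonormal basis (basis-independent for trace-class operators).\<close>
definition trace :: "'a measure \<Rightarrow> (('a \<Rightarrow> complex) \<Rightarrow> ('a \<Rightarrow> complex)) \<Rightarrow> complex" where
  "trace M T = infsum (\<lambda>e. ip M e (T e)) (SOME B. onb M B)"

text \<open>Density operator: positive trace-class operator of trace 1. For a positive operator,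
  trace class means the diagonal sum (of |T| = T) is finite in an orthonormal basis.\<close>
definition density_operator :: "'a measure \<Rightarrow> (('a \<Rightarrow> complex) \<Rightarrow> ('a \<Rightarrow> complex)) \<Rightarrow> bool" where
  "density_operator M \<rho> \<longleftrightarrow> is_operator M \<rho> \<and> positive_op M \<rho>
     \<and> (\<exists>B. onb M B \<and> (\<lambda>e. ip M e (\<rho> e)) summable_on B \<and> infsum (\<lambda>e. ip M e (\<rho> e)) B = 1)"

text \<open>mu(A) = |chi_A><chi_A| : f \<mapsto> (int_A f dnu) chi_A.\<close>
definition qmu :: "'a measure \<Rightarrow> 'a set \<Rightarrow> ('a \<Rightarrow> complex) \<Rightarrow> ('a \<Rightarrow> complex)" where
  "qmu M A f = (\<lambda>x. (LINT y:A|M. f y) * indicator A x)"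

definition mu_q :: "'a measure \<Rightarrow> (('a \<Rightarrow> complex) \<Rightarrow> ('a \<Rightarrow> complex)) \<Rightarrow> 'a set \<Rightarrow> complex" where
  "mu_q M \<rho> A = trace M (\<rho> \<circ> qmu M A)"

end

theory Submission
  imports Defs
begin


definition nrm2 :: "'a measure \<Rightarrow> ('a \<Rightarrow> complex) \<Rightarrow> real" where
  "nrm2 M f = (LINT x|M. (cmod (f x))\<^sup>2)"

lemma meas_cnj[measurable (raw)]: "f \<in> borel_measurable M \<Longrightarrow> (\<lambda>x. cnj (f x)) \<in> borel_measurable M"
  by (rule borel_measurable_continuous_on[OF continuous_on_cnj[OF continuous_on_id]])

lemma L2I: "f \<in> borel_measurable M \<Longrightarrow> integrable M (\<lambda>x. (cmod (f x))\<^sup>2) \<Longrightarrow> f \<in> L2 M"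
  by (simp add: L2_def)
lemma L2_meas: "f \<in> L2 M \<Longrightarrow> f \<in> borel_measurable M"
  by (simp add: L2_def)
lemma L2_int: "f \<in> L2 M \<Longrightarrow> integrable M (\<lambda>x. (cmod (f x))\<^sup>2)"
  by (simp add: L2_def)

lemma sq_ineq1: "cmod (cnj a * b) \<le> ((cmod a)\<^sup>2 + (cmod b)\<^sup>2) / 2"
proof -
  have "0 \<le> (cmod a - cmod b)\<^sup>2" by simp
  then show ?thesis by (simp add: norm_mult power2_eq_square algebra_simps)
qed

lemma sq_ineq2: "(cmod (a + b))\<^sup>2 \<le> 2 * (cmod a)\<^sup>2 + 2 * (cmod b)\<^sup>2"
proof -
  have "cmod (a+b) \<le> cmod a + cmod b" by (rule norm_triangle_ineq)
  then have "(cmod (a+b))\<^sup>2 \<le> (cmod a + cmod b)\<^sup>2" by (simp add: power_mono)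
  moreover have "0 \<le> (cmod a - cmod b)\<^sup>2" by simp
  ultimately show ?thesis by (simp add: power2_eq_square algebra_simps)
qed

lemma L2_prod_int:
  assumes "f \<in> L2 M" "g \<in> L2 M"
  shows "integrable M (\<lambda>x. cnj (f x) * g x)"
proof (rule Bochner_Integration.integrable_bound)
  show "integrable M (\<lambda>x. ((cmod (f x))\<^sup>2 + (cmod (g x))\<^sup>2) / 2)"
    using L2_int[OF assms(1)] L2_int[OF assms(2)] by auto
  note [measurable] = L2_meas[OF assms(1)] L2_meas[OF assms(2)]
  show "(\<lambda>x. cnj (f x) * g x) \<in> borel_measurable M"
    by measurable
  show "AE x in M. norm (cnj (f x) * g x) \<le> norm (((cmod (f x))\<^sup>2 + (cmod (g x))\<^sup>2) / 2)"
    using sq_ineq1 by (auto intro!: AE_I2 order_trans[OF sq_ineq1])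
qed

lemma L2_lin:
  assumes "f \<in> L2 M" "g \<in> L2 M"
  shows "(\<lambda>x. c * f x + g x) \<in> L2 M"
proof (rule L2I)
  show "(\<lambda>x. c * f x + g x) \<in> borel_measurable M"
    using L2_meas[OF assms(1)] L2_meas[OF assms(2)] by measurable
  show "integrable M (\<lambda>x. (cmod (c * f x + g x))\<^sup>2)"
  proof (rule Bochner_Integration.integrable_bound)
    show "integrable M (\<lambda>x. 2 * (cmod c)\<^sup>2 * (cmod (f x))\<^sup>2 + 2 * (cmod (g x))\<^sup>2)"
      using L2_int[OF assms(1)] L2_int[OF assms(2)] by auto
    show "(\<lambda>x. (cmod (c * f x + g x))\<^sup>2) \<in> borel_measurable M"
      using L2_meas[OF assms(1)] L2_meas[OF assms(2)] by measurable
    show "AE x in M. norm ((cmod (c * f x + g x))\<^sup>2) \<le> norm (2 * (cmod c)\<^sup>2 * (cmod (f x))\<^sup>2 + 2 * (cmod (g x))\<^sup>2)"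
    proof (intro AE_I2)
      fix x show "norm ((cmod (c * f x + g x))\<^sup>2) \<le> norm (2 * (cmod c)\<^sup>2 * (cmod (f x))\<^sup>2 + 2 * (cmod (g x))\<^sup>2)"
        using sq_ineq2[of "c * f x" "g x"] by (simp add: norm_mult power_mult_distrib)
    qed
  qed
qed

lemma L2_add: "f \<in> L2 M \<Longrightarrow> g \<in> L2 M \<Longrightarrow> (\<lambda>x. f x + g x) \<in> L2 M"
  using L2_lin[of f M g 1] by simp
lemma L2_scale: "f \<in> L2 M \<Longrightarrow> (\<lambda>x. c * f x) \<in> L2 M"
proof -
  assume f: "f \<in> L2 M"
  have "(\<lambda>x. 0::complex) \<in> L2 M" by (rule L2I) auto
  from L2_lin[OF f this, of c] show ?thesis by simp
qed
lemma L2_zero: "(\<lambda>x. 0) \<in> L2 M"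
  by (rule L2I) auto
lemma L2_diff: "f \<in> L2 M \<Longrightarrow> g \<in> L2 M \<Longrightarrow> (\<lambda>x. f x - g x) \<in> L2 M"
  using L2_lin[of g M f "-1"] by simp
lemma L2_sum: "finite F \<Longrightarrow> (\<And>i. i \<in> F \<Longrightarrow> u i \<in> L2 M) \<Longrightarrow> (\<lambda>x. \<Sum>i\<in>F. u i x) \<in> L2 M"
  by (induction F rule: finite_induct) (auto intro: L2_add L2_zero)
lemma L2_const: "finite_measure M \<Longrightarrow> (\<lambda>x. c) \<in> L2 M"
  by (rule L2I) (auto simp: finite_measure.integrable_const)
lemma L2_ind: "finite_measure M \<Longrightarrow> A \<in> sets M \<Longrightarrow> (indicator A :: 'a \<Rightarrow> complex) \<in> L2 M"
proof (rule L2I)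
  assume "finite_measure M" "A \<in> sets M"
  then show "(indicator A :: 'a \<Rightarrow> complex) \<in> borel_measurable M" by measurable
  have "(\<lambda>x. (cmod (indicator A x :: complex))\<^sup>2) = (\<lambda>x. indicator A x :: real)"
    by (auto simp: indicator_def)
  moreover have "emeasure M A < \<infinity>"
    using \<open>finite_measure M\<close> by (simp add: finite_measure.emeasure_finite less_top[symmetric])
  ultimately show "integrable M (\<lambda>x. (cmod (indicator A x :: complex))\<^sup>2)"
    using \<open>A \<in> sets M\<close> by simp
qed

lemma nrm2_nonneg: "0 \<le> nrm2 M f"
  unfolding nrm2_def by simp

lemma ip_self: "ip M f f = complex_of_real (nrm2 M f)"
proof -
  have "(\<lambda>x. cnj (f x) * f x) = (\<lambda>x. complex_of_real ((cmod (f x))\<^sup>2))"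
    by (auto simp: cmod_power2 complex_mult_cnj mult.commute)
  then show ?thesis unfolding ip_def nrm2_def by (simp del: of_real_power)
qed

lemma ip_cnj: "ip M g f = cnj (ip M f g)"
proof -
  have "cnj (ip M f g) = (CLINT x|M. cnj (cnj (f x) * g x))"
    unfolding ip_def by (rule Bochner_Integration.integral_cnj[where f="\<lambda>x. cnj (f x) * g x", symmetric])
  then show ?thesis unfolding ip_def by (simp add: mult.commute)
qed

lemma ip_lin2:
  assumes "f \<in> L2 M" "g \<in> L2 M" "h \<in> L2 M"
  shows "ip M f (\<lambda>x. c * g x + h x) = c * ip M f g + ip M f h"
proof -
  have "(\<lambda>x. cnj (f x) * (c * g x + h x)) = (\<lambda>x. c * (cnj (f x) * g x) + cnj (f x) * h x)"
    by (auto simp: algebra_simps)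
  then show ?thesis unfolding ip_def
    using L2_prod_int[OF assms(1,2)] L2_prod_int[OF assms(1,3)] by simp
qed

lemma ip_lin1:
  assumes "f \<in> L2 M" "g \<in> L2 M" "h \<in> L2 M"
  shows "ip M (\<lambda>x. c * g x + h x) f = cnj c * ip M g f + ip M h f"
  using ip_lin2[OF assms, of c] by (metis complex_cnj_add complex_cnj_mult complex_cnj_cnj ip_cnj)

lemma ip_AE2:
  assumes "f \<in> L2 M" "g \<in> L2 M" "h \<in> L2 M" "AE x in M. g x = h x"
  shows "ip M f g = ip M f h"
proof -
  note [measurable] = L2_meas[OF assms(1)] L2_meas[OF assms(2)] L2_meas[OF assms(3)]
  show ?thesis unfolding ip_def using assms(4)
    by (intro integral_cong_AE) auto
qed

lemma ip_AE1:
  assumes "f \<in> L2 M" "g \<in> L2 M" "h \<in> L2 M" "AE x in M. g x = h x"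
  shows "ip M g f = ip M h f"
  using ip_AE2[OF assms] by (metis ip_cnj)

lemma nrm2_AE:
  assumes "g \<in> L2 M" "h \<in> L2 M" "AE x in M. g x = h x"
  shows "nrm2 M g = nrm2 M h"
  using ip_AE2[OF assms(1,1,2,3)] ip_AE1[OF assms(2,1,2,3)] by (simp add: ip_self)

lemma nrm2_zero_AE:
  assumes "f \<in> L2 M" "nrm2 M f = 0"
  shows "AE x in M. f x = 0"
proof -
  have "AE x in M. (cmod (f x))\<^sup>2 = 0"
    using assms integral_nonneg_eq_0_iff_AE[of M "\<lambda>x. (cmod (f x))\<^sup>2"]
    by (auto simp: nrm2_def L2_def)
  then show ?thesis by auto
qed


lemma quad_disc:
  fixes a b c :: real
  assumes "\<And>t. 0 \<le> a + 2 * t * b + t\<^sup>2 * c" "0 \<le> c"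
  shows "b\<^sup>2 \<le> a * c"
proof (cases "c = 0")
  case True
  show ?thesis
  proof (cases "b = 0")
    case False
    have "0 \<le> a + 2 * (-(a+1)/(2*b)) * b + (-(a+1)/(2*b))\<^sup>2 * c" by (rule assms(1))
    with True False show ?thesis by (simp add: field_simps)
  qed (use True assms in simp)
next
  case False
  with assms have c: "c > 0" by simp
  have "0 \<le> a + 2 * (-b/c) * b + (-b/c)\<^sup>2 * c" by (rule assms(1))
  also have "\<dots> = (a * c - b\<^sup>2) / c" using c by (simp add: field_simps power2_eq_square)
  finally show ?thesis using c by (simp add: divide_nonneg_pos zero_le_divide_iff)
qed

lemma form_CS:
  fixes Bf :: "('a \<Rightarrow> complex) \<Rightarrow> ('a \<Rightarrow> complex) \<Rightarrow> complex"
  assumes herm: "\<And>f g. f\<in>V \<Longrightarrow> g\<in>V \<Longrightarrow> Bf g f = cnj (Bf f g)"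
  and lin: "\<And>f g h c. f\<in>V \<Longrightarrow> g\<in>V \<Longrightarrow> h\<in>V \<Longrightarrow> Bf f (\<lambda>x. c * g x + h x) = c * Bf f g + Bf f h"
  and clos: "\<And>g h c. g\<in>V \<Longrightarrow> h\<in>V \<Longrightarrow> (\<lambda>x. c * g x + h x) \<in> V"
  and pos: "\<And>f. f\<in>V \<Longrightarrow> 0 \<le> Re (Bf f f)"
  and f: "f\<in>V" and g: "g\<in>V"
  shows "(cmod (Bf f g))\<^sup>2 \<le> Re (Bf f f) * Re (Bf g g)"
proof -
  define b where "b = Bf f g"
  have gf: "Bf g f = cnj b" unfolding b_def by (rule herm[OF f g])
  have Bhh: "Re (Bf (\<lambda>x. s * g x + f x) (\<lambda>x. s * g x + f x))
      = (cmod s)\<^sup>2 * Re (Bf g g) + 2 * Re (s * b) + Re (Bf f f)" for s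
  proof -
    let ?h = "\<lambda>x. s * g x + f x"
    have h: "?h \<in> V" using clos f g by simp
    have "Bf ?h ?h = s * Bf ?h g + Bf ?h f" using lin[OF h g f] by simp
    also have "Bf ?h g = cnj (Bf g ?h)" by (rule herm[OF g h])
    also have "Bf g ?h = s * Bf g g + Bf g f" using lin[OF g g f] by simp
    also have "Bf ?h f = cnj (Bf f ?h)" by (rule herm[OF f h])
    also have "Bf f ?h = s * Bf f g + Bf f f" using lin[OF f g f] by simp
    finally have "Bf ?h ?h = s * cnj (s * Bf g g + cnj b) + cnj (s * b + Bf f f)"
      unfolding gf b_def by simp
    then have "Re (Bf ?h ?h) = (Re s * Re s + Im s * Im s) * Re (Bf g g) + 2 * Re (s * b) + Re (Bf f f)"
      by (simp add: algebra_simps)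
    moreover have cs2: "cmod s * cmod s = Re s * Re s + Im s * Im s"
      using cmod_power2[of s] by (simp only: power2_eq_square)
    ultimately show ?thesis by (simp only: power2_eq_square cs2)
  qed
  have quad: "0 \<le> Re (Bf f f) + 2 * t * cmod b + t\<^sup>2 * Re (Bf g g)" for t :: real
  proof (cases "b = 0")
    case True
    have "0 \<le> Re (Bf (\<lambda>x. of_real t * g x + f x) (\<lambda>x. of_real t * g x + f x))"
      using pos clos f g by simp
    then show ?thesis using Bhh[of "of_real t"] True by (simp add: power2_eq_square)
  next
    case False
    define s where "s = of_real t * cnj b / of_real (cmod b)"
    have sb: "s * b = of_real (t * cmod b)"
    proof -
      have cb: "cnj b * b = of_real ((cmod b)\<^sup>2)"
        using cmod_power2[of b] by (simp add: complex_eq_iff power2_eq_square del: of_real_power)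
      have "s * b = of_real t * (cnj b * b) / of_real (cmod b)" by (simp add: s_def)
      also have "\<dots> = of_real t * of_real ((cmod b)\<^sup>2) / of_real (cmod b)" by (simp only: cb)
      also have "\<dots> = of_real (t * cmod b)" using False by (simp add: power2_eq_square del: of_real_power)
      finally show ?thesis .
    qed
    have cs: "(cmod s)\<^sup>2 = t\<^sup>2"
      using False by (simp add: s_def norm_mult norm_divide power2_eq_square)
    have "0 \<le> Re (Bf (\<lambda>x. s * g x + f x) (\<lambda>x. s * g x + f x))"
      using pos clos f g by simp
    then show ?thesis unfolding Bhh sb cs by simp
  qed
  have "(cmod b)\<^sup>2 \<le> Re (Bf f f) * Re (Bf g g)"
    by (rule quad_disc[OF quad pos[OF g]])
  then show ?thesis unfolding b_def .
qed

lemma ip_CS: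
  assumes "f \<in> L2 M" "g \<in> L2 M"
  shows "cmod (ip M f g) \<le> sqrt (nrm2 M f) * sqrt (nrm2 M g)"
proof -
  have "(cmod (ip M f g))\<^sup>2 \<le> Re (ip M f f) * Re (ip M g g)"
  proof (rule form_CS[where V="L2 M"])
    show "\<And>f g. ip M g f = cnj (ip M f g)" by (rule ip_cnj)
    show "\<And>f g h c. f \<in> L2 M \<Longrightarrow> g \<in> L2 M \<Longrightarrow> h \<in> L2 M \<Longrightarrow> ip M f (\<lambda>x. c * g x + h x) = c * ip M f g + ip M f h"
      by (rule ip_lin2)
    show "\<And>g h c. g \<in> L2 M \<Longrightarrow> h \<in> L2 M \<Longrightarrow> (\<lambda>x. c * g x + h x) \<in> L2 M" by (rule L2_lin)
    show "\<And>f. 0 \<le> Re (ip M f f)" by (simp add: ip_self nrm2_nonneg)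
  qed (use assms in auto)
  then have "(cmod (ip M f g))\<^sup>2 \<le> nrm2 M f * nrm2 M g" by (simp add: ip_self)
  then show ?thesis
    using real_le_rsqrt real_sqrt_mult by metis
qed



lemma cnj_mult_self: "cnj z * z = complex_of_real ((cmod z)\<^sup>2)"
  using cmod_power2[of z] by (simp add: complex_eq_iff power2_eq_square del: of_real_power)

lemma ip_zero2: "f \<in> L2 M \<Longrightarrow> ip M f (\<lambda>x. 0) = 0"
  unfolding ip_def by simp

lemma ip_sum2:
  assumes "f \<in> L2 M" "finite F" "\<And>i. i \<in> F \<Longrightarrow> u i \<in> L2 M"
  shows "ip M f (\<lambda>x. \<Sum>i\<in>F. a i * u i x) = (\<Sum>i\<in>F. a i * ip M f (u i))"
  using assms(2,3)
proof (induction F rule: finite_induct)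
  case empty
  then show ?case using ip_zero2[OF assms(1)] by simp
next
  case (insert j F)
  have s: "(\<lambda>x. \<Sum>i\<in>insert j F. a i * u i x) = (\<lambda>x. a j * u j x + (\<Sum>i\<in>F. a i * u i x))"
    using insert by simp
  have "(\<lambda>x. \<Sum>i\<in>F. a i * u i x) \<in> L2 M"
    using insert by (intro L2_sum) (auto intro: L2_scale)
  then show ?case unfolding s using insert ip_lin2[OF assms(1), of "u j" "\<lambda>x. \<Sum>i\<in>F. a i * u i x" "a j"]
    by simp
qed

lemma ip_sum1:
  assumes "f \<in> L2 M" "finite F" "\<And>i. i \<in> F \<Longrightarrow> u i \<in> L2 M"
  shows "ip M (\<lambda>x. \<Sum>i\<in>F. a i * u i x) f = (\<Sum>i\<in>F. cnj (a i) * ip M (u i) f)"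
proof -
  have "ip M (\<lambda>x. \<Sum>i\<in>F. a i * u i x) f = cnj (ip M f (\<lambda>x. \<Sum>i\<in>F. a i * u i x))"
    by (rule ip_cnj)
  also have "\<dots> = (\<Sum>i\<in>F. cnj (a i) * cnj (ip M f (u i)))"
    by (simp add: ip_sum2[OF assms] cnj_sum)
  also have "\<dots> = (\<Sum>i\<in>F. cnj (a i) * ip M (u i) f)"
    by (simp add: ip_cnj[of M f])
  finally show ?thesis .
qed

lemma onbD:
  assumes "onb M B"
  shows "B \<subseteq> L2 M" "\<And>e. e \<in> B \<Longrightarrow> ip M e e = 1"
    "\<And>e e'. e \<in> B \<Longrightarrow> e' \<in> B \<Longrightarrow> e \<noteq> e' \<Longrightarrow> ip M e e' = 0"
    "\<And>f. f \<in> L2 M \<Longrightarrow> (\<And>e. e \<in> B \<Longrightarrow> ip M e f = 0) \<Longrightarrow> ip M f f = 0"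
  using assms unfolding onb_def by auto

definition proj :: "'a measure \<Rightarrow> ('a \<Rightarrow> complex) \<Rightarrow> ('a \<Rightarrow> complex) set \<Rightarrow> ('a \<Rightarrow> complex)" where
  "proj M h F = (\<lambda>x. \<Sum>e\<in>F. ip M e h * e x)"

context
  fixes M B h
  assumes B: "onb M B" and h: "h \<in> L2 M"
begin

lemma proj_L2: "finite F \<Longrightarrow> F \<subseteq> B \<Longrightarrow> proj M h F \<in> L2 M"
  unfolding proj_def using onbD(1)[OF B] by (intro L2_sum) (auto intro!: L2_scale)

lemma ip_e_proj:
  assumes "finite F" "F \<subseteq> B" "e \<in> B"
  shows "ip M e (proj M h F) = (if e \<in> F then ip M e h else 0)"
proof -
  have eL: "e \<in> L2 M" using assms onbD(1)[OF B] by auto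
  have "ip M e (proj M h F) = (\<Sum>e'\<in>F. ip M e' h * ip M e e')"
    unfolding proj_def using assms onbD(1)[OF B] by (intro ip_sum2[OF eL]) auto
  also have "\<dots> = (\<Sum>e'\<in>F. if e' = e then ip M e' h else 0)"
    using assms onbD(2,3)[OF B] by (intro sum.cong) auto
  also have "\<dots> = (if e \<in> F then ip M e h else 0)"
    using assms(1) by (simp add: sum.delta')
  finally show ?thesis .
qed

lemma ip_proj_h:
  assumes "finite F" "F \<subseteq> B"
  shows "ip M (proj M h F) h = (\<Sum>e\<in>F. of_real ((cmod (ip M e h))\<^sup>2))"
proof -
  have "ip M (proj M h F) h = (\<Sum>e\<in>F. cnj (ip M e h) * ip M e h)"
    unfolding proj_def using assms onbD(1)[OF B] by (intro ip_sum1[OF h]) auto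
  also have "\<dots> = (\<Sum>e\<in>F. of_real ((cmod (ip M e h))\<^sup>2))"
    by (intro sum.cong refl) (rule cnj_mult_self)
  finally show ?thesis .
qed

lemma ip_proj_proj:
  assumes "finite F" "F \<subseteq> B"
  shows "ip M (proj M h F) (proj M h F) = (\<Sum>e\<in>F. of_real ((cmod (ip M e h))\<^sup>2))"
proof -
  have "ip M (proj M h F) (proj M h F) = (\<Sum>e\<in>F. cnj (ip M e h) * ip M e (proj M h F))"
    unfolding proj_def[of M h F] using assms onbD(1)[OF B] proj_L2[OF assms]
    by (intro ip_sum1) (auto simp: proj_def)
  also have "\<dots> = (\<Sum>e\<in>F. cnj (ip M e h) * ip M e h)"
    using assms by (intro sum.cong refl, subst ip_e_proj[OF assms]) auto
  also have "\<dots> = (\<Sum>e\<in>F. of_real ((cmod (ip M e h))\<^sup>2))"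
    by (intro sum.cong refl) (rule cnj_mult_self)
  finally show ?thesis .
qed

lemma bessel_eq:
  assumes "finite F" "F \<subseteq> B"
  shows "nrm2 M (\<lambda>x. h x - proj M h F x) = nrm2 M h - (\<Sum>e\<in>F. (cmod (ip M e h))\<^sup>2)"
proof -
  let ?P = "proj M h F"
  have P: "?P \<in> L2 M" by (rule proj_L2[OF assms])
  have d: "(\<lambda>x. h x - ?P x) = (\<lambda>x. (-1) * ?P x + h x)" by auto
  have dL: "(\<lambda>x. (-1) * ?P x + h x) \<in> L2 M" using P h by (rule L2_lin)
  have "ip M (\<lambda>x. (-1) * ?P x + h x) (\<lambda>x. (-1) * ?P x + h x)
      = - ip M ?P (\<lambda>x. (-1) * ?P x + h x) + ip M h (\<lambda>x. (-1) * ?P x + h x)"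
    using ip_lin1[OF dL P h, of "-1"] by simp
  also have "\<dots> = - (- ip M ?P ?P + ip M ?P h) + (- ip M h ?P + ip M h h)"
    using ip_lin2[OF P P h, of "-1"] ip_lin2[OF h P h, of "-1"] by simp
  also have "ip M h ?P = cnj (ip M ?P h)" by (rule ip_cnj)
  finally have "ip M (\<lambda>x. (-1) * ?P x + h x) (\<lambda>x. (-1) * ?P x + h x)
     = ip M h h - (\<Sum>e\<in>F. of_real ((cmod (ip M e h))\<^sup>2))"
    unfolding ip_proj_proj[OF assms] ip_proj_h[OF assms] by simp
  then have "complex_of_real (nrm2 M (\<lambda>x. h x - ?P x)) = complex_of_real (nrm2 M h - (\<Sum>e\<in>F. (cmod (ip M e h))\<^sup>2))"
    unfolding d ip_self by simp
  then show ?thesis by (simp only: of_real_eq_iff)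
qed

lemma bessel_le:
  assumes "finite F" "F \<subseteq> B"
  shows "(\<Sum>e\<in>F. (cmod (ip M e h))\<^sup>2) \<le> nrm2 M h"
  using bessel_eq[OF assms] nrm2_nonneg[of M "\<lambda>x. h x - proj M h F x"] by simp

end


lemma nrm2_add_le:
  assumes "a \<in> L2 M" "b \<in> L2 M"
  shows "nrm2 M (\<lambda>x. a x + b x) \<le> 2 * nrm2 M a + 2 * nrm2 M b"
proof -
  have "nrm2 M (\<lambda>x. a x + b x) \<le> (LINT x|M. 2 * (cmod (a x))\<^sup>2 + 2 * (cmod (b x))\<^sup>2)"
    unfolding nrm2_def
    using L2_int[OF L2_add[OF assms]] L2_int[OF assms(1)] L2_int[OF assms(2)]
    by (intro integral_mono) (auto intro: sq_ineq2)
  also have "\<dots> = 2 * nrm2 M a + 2 * nrm2 M b"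
    unfolding nrm2_def using L2_int[OF assms(1)] L2_int[OF assms(2)] by simp
  finally show ?thesis .
qed

lemma nrm2_nn:
  assumes "f \<in> L2 M"
  shows "(\<integral>\<^sup>+x. ennreal ((cmod (f x))\<^sup>2) \<partial>M) = ennreal (nrm2 M f)"
  unfolding nrm2_def using L2_int[OF assms] by (intro nn_integral_eq_integral) auto

lemma L1_le_L2:
  assumes "prob_space M" "d \<in> L2 M"
  shows "(LINT x|M. cmod (d x)) \<le> sqrt (nrm2 M d)"
proof -
  have fm: "(\<lambda>x. complex_of_real (cmod (d x))) \<in> borel_measurable M"
    using L2_meas[OF assms(2)] by measurable
  have f: "(\<lambda>x. complex_of_real (cmod (d x))) \<in> L2 M"
    using fm L2_int[OF assms(2)] by (intro L2I) auto
  have one: "(\<lambda>x. 1::complex) \<in> L2 M"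
    using assms(1) by (intro L2_const) (simp add: prob_space.finite_measure)
  have "ip M (\<lambda>x. complex_of_real (cmod (d x))) (\<lambda>x. 1) = complex_of_real (LINT x|M. cmod (d x))"
    unfolding ip_def by simp
  moreover have "nrm2 M (\<lambda>x. 1) = 1"
    unfolding nrm2_def using assms(1) by (simp add: prob_space.prob_space)
  moreover have "nrm2 M (\<lambda>x. complex_of_real (cmod (d x))) = nrm2 M d"
    unfolding nrm2_def by simp
  moreover have "0 \<le> (LINT x|M. cmod (d x))" by simp
  ultimately show ?thesis using ip_CS[OF f one] by simp
qed

lemma L2_integrable:
  assumes "prob_space M" "f \<in> L2 M"
  shows "integrable M f"
proof -
  have one: "(\<lambda>x. 1::complex) \<in> L2 M"
    using assms(1) by (intro L2_const) (simp add: prob_space.finite_measure)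
  have "integrable M (\<lambda>x. cnj (f x) * 1)" by (rule L2_prod_int[OF assms(2) one])
  then have "integrable M (\<lambda>x. cnj (cnj (f x)))" by (intro integrable_cnj) simp
  then show ?thesis by simp
qed

lemma RF:
  assumes prob: "prob_space M"
  and g: "\<And>n. g n \<in> L2 M"
  and cauchy: "\<And>\<epsilon>. \<epsilon> > 0 \<Longrightarrow> \<exists>N. \<forall>m\<ge>N. \<forall>n\<ge>N. nrm2 M (\<lambda>x. g m x - g n x) < \<epsilon>"
  shows "\<exists>G\<in>L2 M. (\<lambda>n. nrm2 M (\<lambda>x. G x - g n x)) \<longlonglongrightarrow> 0"
proof -
  have gm[measurable]: "\<And>n. g n \<in> borel_measurable M" using g L2_meas by blast
  have "\<forall>j. \<exists>N. \<forall>m\<ge>N. \<forall>n\<ge>N. nrm2 M (\<lambda>x. g m x - g n x) < (1/4)^j"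
    using cauchy by simp
  then obtain N0 where N0: "\<And>j m n. m \<ge> N0 j \<Longrightarrow> n \<ge> N0 j \<Longrightarrow> nrm2 M (\<lambda>x. g m x - g n x) < (1/4)^j"
    by metis
  define N where "N j = (\<Sum>i\<le>j. N0 i)" for j
  have N0N: "N0 j \<le> N j" for j unfolding N_def by (rule member_le_sum) auto
  have Nmono: "N i \<le> N j" if "i \<le> j" for i j
    unfolding N_def using that by (intro sum_mono2) auto
  have Nb: "nrm2 M (\<lambda>x. g m x - g (N j) x) < (1/4)^j" if "m \<ge> N j" for m j
    using N0 N0N that order_trans by blast
  define d where "d j = (\<lambda>x. g (N (Suc j)) x - g (N j) x)" for j
  have dL: "d j \<in> L2 M" for j unfolding d_def by (intro L2_diff g)
  have dm[measurable]: "d j \<in> borel_measurable M" for j using dL L2_meas by blast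
  have dn: "nrm2 M (d j) < (1/4)^j" for j
    unfolding d_def using Nb Nmono by simp
  have d1: "(LINT x|M. cmod (d j x)) \<le> (1/2)^j" for j
  proof -
    have "(LINT x|M. cmod (d j x)) \<le> sqrt (nrm2 M (d j))" by (rule L1_le_L2[OF prob dL])
    also have "\<dots> \<le> sqrt ((1/4)^j)" using dn[of j] by simp
    also have "sqrt ((1/4)^j) = (1/2::real)^j"
    proof -
      have e: "(1/4::real)^j = ((1/2)^j)\<^sup>2"
        by (simp add: power2_eq_square power_mult_distrib[symmetric])
      show ?thesis unfolding e by (simp only: real_sqrt_abs) simp
    qed
    finally show ?thesis .
  qed
  have dint: "integrable M (\<lambda>x. cmod (d j x))" for j
    using L2_integrable[OF prob dL] by (rule integrable_norm)
  have nnd: "(\<integral>\<^sup>+x. ennreal (cmod (d j x)) \<partial>M) = ennreal (LINT x|M. cmod (d j x))" for j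
    using dint by (intro nn_integral_eq_integral) auto
  have "(\<integral>\<^sup>+x. (\<Sum>j. ennreal (cmod (d j x))) \<partial>M) = (\<Sum>j. \<integral>\<^sup>+x. ennreal (cmod (d j x)) \<partial>M)"
    by (intro nn_integral_suminf) measurable
  also have "\<dots> = (\<Sum>j. ennreal (LINT x|M. cmod (d j x)))" by (simp only: nnd)
  also have "\<dots> \<le> (\<Sum>j. ennreal ((1/2)^j))"
    by (intro suminf_le summableI ennreal_leI d1)
  also have "\<dots> = ennreal (\<Sum>j. (1/2)^j)"
    by (intro suminf_ennreal2) (auto intro: summable_geometric)
  also have "\<dots> < \<infinity>" by simp
  finally have fin: "(\<integral>\<^sup>+x. (\<Sum>j. ennreal (cmod (d j x))) \<partial>M) \<noteq> \<infinity>" by simp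
  have "AE x in M. (\<Sum>j. ennreal (cmod (d j x))) \<noteq> \<infinity>"
    by (rule nn_integral_PInf_AE[OF _ fin]) measurable
  then have conv: "AE x in M. convergent (\<lambda>j. g (N j) x)"
  proof (rule AE_mp, intro AE_I2 impI)
    fix x assume "(\<Sum>j. ennreal (cmod (d j x))) \<noteq> \<infinity>"
    then have "summable (\<lambda>j. cmod (d j x))" by (intro summable_suminf_not_top) auto
    then have "summable (\<lambda>j. d j x)" by (rule summable_norm_cancel)
    then have "convergent (\<lambda>n. \<Sum>i<n. d i x)" by (simp add: summable_iff_convergent)
    then have c: "convergent (\<lambda>n. g (N 0) x + (\<Sum>i<n. d i x))"
      by (intro convergent_add convergent_const)
    have "(\<lambda>n. g (N 0) x + (\<Sum>i<n. d i x)) = (\<lambda>n. g (N n) x)"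
    proof
      fix n show "g (N 0) x + (\<Sum>i<n. d i x) = g (N n) x"
        unfolding d_def using sum_lessThan_telescope[of "\<lambda>i. g (N i) x" n] by simp
    qed
    then show "convergent (\<lambda>j. g (N j) x)" using c by simp
  qed
  define G where "G x = lim (\<lambda>j. g (N j) x)" for x
  have Gm[measurable]: "G \<in> borel_measurable M" unfolding G_def by measurable
  have Glim: "AE x in M. (\<lambda>j. g (N j) x) \<longlonglongrightarrow> G x"
    using conv by (rule AE_mp) (auto simp: G_def convergent_LIMSEQ_iff)
  have bnd: "(\<integral>\<^sup>+x. ennreal ((cmod (G x - g (N j) x))\<^sup>2) \<partial>M) \<le> ennreal ((1/4)^j)" for j
  proof -
    have "AE x in M. ennreal ((cmod (G x - g (N j) x))\<^sup>2)
        = liminf (\<lambda>m. ennreal ((cmod (g (N m) x - g (N j) x))\<^sup>2))"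
    proof (rule AE_mp[OF Glim], intro AE_I2 impI)
      fix x assume "(\<lambda>m. g (N m) x) \<longlonglongrightarrow> G x"
      then have "(\<lambda>m. ennreal ((cmod (g (N m) x - g (N j) x))\<^sup>2)) \<longlonglongrightarrow> ennreal ((cmod (G x - g (N j) x))\<^sup>2)"
        by (intro tendsto_intros)
      then show "ennreal ((cmod (G x - g (N j) x))\<^sup>2) = liminf (\<lambda>m. ennreal ((cmod (g (N m) x - g (N j) x))\<^sup>2))"
        by (intro lim_imp_Liminf[symmetric]) auto
    qed
    then have "(\<integral>\<^sup>+x. ennreal ((cmod (G x - g (N j) x))\<^sup>2) \<partial>M)
        = (\<integral>\<^sup>+x. liminf (\<lambda>m. ennreal ((cmod (g (N m) x - g (N j) x))\<^sup>2)) \<partial>M)"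
      by (rule nn_integral_cong_AE)
    also have "\<dots> \<le> liminf (\<lambda>m. \<integral>\<^sup>+x. ennreal ((cmod (g (N m) x - g (N j) x))\<^sup>2) \<partial>M)"
      by (intro nn_integral_liminf) measurable
    also have "\<dots> \<le> ennreal ((1/4)^j)"
    proof (intro Liminf_le)
      show "sequentially \<noteq> bot" by simp
      show "\<forall>\<^sub>F m in sequentially. (\<integral>\<^sup>+x. ennreal ((cmod (g (N m) x - g (N j) x))\<^sup>2) \<partial>M) \<le> ennreal ((1/4)^j)"
      proof (rule eventually_sequentiallyI[of j])
        fix m assume "j \<le> m"
        then have "N j \<le> N m" by (rule Nmono)
        then have lt: "nrm2 M (\<lambda>x. g (N m) x - g (N j) x) < (1/4)^j" by (rule Nb)
        have "(\<integral>\<^sup>+x. ennreal ((cmod (g (N m) x - g (N j) x))\<^sup>2) \<partial>M) = ennreal (nrm2 M (\<lambda>x. g (N m) x - g (N j) x))"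
          by (rule nrm2_nn[OF L2_diff[OF g g]])
        also have "\<dots> \<le> ennreal ((1/4)^j)" using lt by (intro ennreal_leI) simp
        finally show "(\<integral>\<^sup>+x. ennreal ((cmod (g (N m) x - g (N j) x))\<^sup>2) \<partial>M) \<le> ennreal ((1/4)^j)" .
      qed
    qed
    finally show ?thesis .
  qed
  have GjL: "(\<lambda>x. G x - g (N j) x) \<in> L2 M" for j
  proof (rule L2I)
    show "(\<lambda>x. G x - g (N j) x) \<in> borel_measurable M" by measurable
    show "integrable M (\<lambda>x. (cmod (G x - g (N j) x))\<^sup>2)"
    proof (rule integrableI_bounded)
      show "(\<lambda>x. (cmod (G x - g (N j) x))\<^sup>2) \<in> borel_measurable M" by measurable
      have "(\<integral>\<^sup>+x. ennreal (norm ((cmod (G x - g (N j) x))\<^sup>2)) \<partial>M) = (\<integral>\<^sup>+x. ennreal ((cmod (G x - g (N j) x))\<^sup>2) \<partial>M)"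
        by simp
      also have "\<dots> < \<infinity>" using bnd[of j] by (simp add: le_less_trans)
      finally show "(\<integral>\<^sup>+x. ennreal (norm ((cmod (G x - g (N j) x))\<^sup>2)) \<partial>M) < \<infinity>" .
    qed
  qed
  have Gj: "nrm2 M (\<lambda>x. G x - g (N j) x) \<le> (1/4)^j" for j
    using bnd[of j] nrm2_nn[OF GjL[of j]] by simp
  have GL: "G \<in> L2 M"
  proof -
    have "(\<lambda>x. (G x - g (N 0) x) + g (N 0) x) \<in> L2 M" by (intro L2_add GjL g)
    then show ?thesis by simp
  qed
  have "(\<lambda>n. nrm2 M (\<lambda>x. G x - g n x)) \<longlonglongrightarrow> 0"
    unfolding LIMSEQ_iff
  proof (intro allI impI)
    fix r :: real assume r: "r > 0"
    obtain j where j: "(1/4::real)^j < r/4" using real_arch_pow_inv[of "r/4" "1/4"] r by auto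
    show "\<exists>no. \<forall>n\<ge>no. norm (nrm2 M (\<lambda>x. G x - g n x) - 0) < r"
    proof (intro exI allI impI)
      fix n assume n: "n \<ge> N j"
      have e: "(\<lambda>x. G x - g n x) = (\<lambda>x. (G x - g (N j) x) + (g (N j) x - g n x))" by auto
      have "nrm2 M (\<lambda>x. G x - g n x) \<le> 2 * nrm2 M (\<lambda>x. G x - g (N j) x) + 2 * nrm2 M (\<lambda>x. g (N j) x - g n x)"
        unfolding e by (intro nrm2_add_le GjL L2_diff g)
      moreover have "nrm2 M (\<lambda>x. g (N j) x - g n x) < (1/4)^j"
        using N0[of j "N j" n] N0N[of j] n by simp
      ultimately have "nrm2 M (\<lambda>x. G x - g n x) < r"
        using Gj[of j] j by simp
      then show "norm (nrm2 M (\<lambda>x. G x - g n x) - 0) < r" using nrm2_nonneg[of M "\<lambda>x. G x - g n x"] by simp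
    qed
  qed
  with GL show ?thesis by blast
qed



lemma nrm2_swap: "nrm2 M (\<lambda>x. a x - b x) = nrm2 M (\<lambda>x. b x - a x)"
  unfolding nrm2_def by (simp add: norm_minus_commute)

lemma parseval:
  assumes prob: "prob_space M" and B: "onb M B" and h: "h \<in> L2 M"
  shows "((\<lambda>e. (cmod (ip M e h))\<^sup>2) has_sum nrm2 M h) B"
proof -
  define w where "w e = (cmod (ip M e h))\<^sup>2" for e
  have BL: "B \<subseteq> L2 M" by (rule onbD(1)[OF B])
  have wsum: "w summable_on B"
  proof (rule nonneg_bdd_above_summable_on)
    show "\<And>x. x \<in> B \<Longrightarrow> 0 \<le> w x" by (simp add: w_def)
    show "bdd_above (sum w ` {F. F \<subseteq> B \<and> finite F})"
      by (rule bdd_aboveI[of _ "nrm2 M h"]) (auto simp: w_def intro: bessel_le[OF B h])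
  qed
  define C where "C = {e\<in>B. w e \<noteq> 0}"
  have Cc: "countable C" unfolding C_def by (rule summable_countable_real[OF wsum])
  define idx where "idx = to_nat_on C"
  have inj: "inj_on idx C" unfolding idx_def using Cc by (rule inj_on_to_nat_on)
  define F where "F n = {e\<in>C. idx e < n}" for n
  have FB: "F n \<subseteq> B" for n unfolding F_def C_def by auto
  have Ffin: "finite (F n)" for n
  proof -
    have "inj_on idx (F n)" using inj by (rule inj_on_subset) (auto simp: F_def)
    moreover have "idx ` F n \<subseteq> {..<n}" by (auto simp: F_def)
    ultimately show ?thesis using finite_imageD finite_subset by blast
  qed
  have Fmono: "F n \<subseteq> F m" if "n \<le> m" for n m using that by (auto simp: F_def)
  define s where "s n = (\<Sum>e\<in>F n. w e)" for n
  define P where "P n = proj M h (F n)" for n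
  have PL: "P n \<in> L2 M" for n unfolding P_def by (rule proj_L2[OF B h Ffin FB])
  have nP: "nrm2 M (proj M h G) = (\<Sum>e\<in>G. w e)" if "finite G" "G \<subseteq> B" for G
  proof -
    have "complex_of_real (nrm2 M (proj M h G)) = complex_of_real (\<Sum>e\<in>G. w e)"
      unfolding ip_self[symmetric] ip_proj_proj[OF B h that] by (simp add: w_def)
    then show ?thesis by (simp only: of_real_eq_iff)
  qed
  have Pdiff: "nrm2 M (\<lambda>x. P m x - P n x) = s m - s n" if "n \<le> m" for n m
  proof -
    have "(\<lambda>x. P m x - P n x) = proj M h (F m - F n)"
      unfolding P_def proj_def using Fmono[OF that] Ffin by (auto simp: sum_diff)
    then have "nrm2 M (\<lambda>x. P m x - P n x) = (\<Sum>e\<in>F m - F n. w e)"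
      using nP[of "F m - F n"] Ffin FB by auto
    then show ?thesis unfolding s_def using Fmono[OF that] Ffin by (simp add: sum_diff)
  qed
  have sinc: "incseq s" unfolding incseq_def s_def
    using Fmono Ffin by (auto intro!: sum_mono2 simp: w_def)
  have sbnd: "s n \<le> nrm2 M h" for n
    unfolding s_def w_def by (rule bessel_le[OF B h Ffin FB])
  obtain L where "s \<longlonglongrightarrow> L" using incseq_convergent[OF sinc] sbnd by blast
  then have sC: "Cauchy s" by (rule LIMSEQ_imp_Cauchy)
  have cauchy: "\<exists>N. \<forall>m\<ge>N. \<forall>n\<ge>N. nrm2 M (\<lambda>x. P m x - P n x) < \<epsilon>" if eps: "\<epsilon> > 0" for \<epsilon>
  proof -
    obtain N where N: "\<And>m n. m \<ge> N \<Longrightarrow> n \<ge> N \<Longrightarrow> norm (s m - s n) < \<epsilon>"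
      using CauchyD[OF sC eps] by blast
    have "nrm2 M (\<lambda>x. P m x - P n x) < \<epsilon>" if "m \<ge> N" "n \<ge> N" for m n
    proof (cases "n \<le> m")
      case True
      then show ?thesis using Pdiff[OF True] N[OF that] by simp
    next
      case False
      then have "m \<le> n" by simp
      then show ?thesis using Pdiff[of m n] N[OF that(2,1)] nrm2_swap[of M "P m" "P n"] by simp
    qed
    then show ?thesis by blast
  qed
  obtain G where GL: "G \<in> L2 M" and Gc: "(\<lambda>n. nrm2 M (\<lambda>x. G x - P n x)) \<longlonglongrightarrow> 0"
    using RF[OF prob PL cauchy] by blast
  have sq0: "(\<lambda>n. sqrt (nrm2 M (\<lambda>x. G x - P n x))) \<longlonglongrightarrow> 0"
    using tendsto_real_sqrt[OF Gc] by simp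
  have ipG: "ip M e G = ip M e h" if e: "e \<in> B" for e
  proof -
    have eL: "e \<in> L2 M" using e BL by auto
    have ne: "nrm2 M e = 1"
      using onbD(2)[OF B e] by (simp add: ip_self)
    have diff: "ip M e (\<lambda>x. G x - P n x) = ip M e G - ip M e (P n)" for n
    proof -
      have "(\<lambda>x. G x - P n x) = (\<lambda>x. (-1) * P n x + G x)" by auto
      then show ?thesis using ip_lin2[OF eL PL GL, of "-1" n] by simp
    qed
    have "(\<lambda>n. ip M e G - ip M e (P n)) \<longlonglongrightarrow> 0"
    proof (rule Lim_null_comparison[OF _ sq0])
      show "\<forall>\<^sub>F n in sequentially. norm (ip M e G - ip M e (P n)) \<le> sqrt (nrm2 M (\<lambda>x. G x - P n x))"
      proof (intro always_eventually allI)
        fix n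
        have "norm (ip M e G - ip M e (P n)) = cmod (ip M e (\<lambda>x. G x - P n x))" by (simp add: diff)
        also have "\<dots> \<le> sqrt (nrm2 M e) * sqrt (nrm2 M (\<lambda>x. G x - P n x))"
          by (rule ip_CS[OF eL L2_diff[OF GL PL]])
        finally show "norm (ip M e G - ip M e (P n)) \<le> sqrt (nrm2 M (\<lambda>x. G x - P n x))"
          by (simp add: ne)
      qed
    qed
    then have "(\<lambda>n. ip M e G - (ip M e G - ip M e (P n))) \<longlonglongrightarrow> ip M e G - 0"
      by (intro tendsto_diff tendsto_const)
    then have l1: "(\<lambda>n. ip M e (P n)) \<longlonglongrightarrow> ip M e G" by simp
    have ev: "\<forall>\<^sub>F n in sequentially. ip M e (P n) = ip M e h"
    proof (cases "e \<in> C")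
      case True
      show ?thesis
      proof (rule eventually_sequentiallyI[of "Suc (idx e)"])
        fix n assume "Suc (idx e) \<le> n"
        then have "e \<in> F n" using True by (auto simp: F_def)
        then show "ip M e (P n) = ip M e h"
          unfolding P_def using ip_e_proj[OF B h Ffin FB e] by simp
      qed
    next
      case False
      then have "ip M e h = 0" using e by (simp add: C_def w_def)
      moreover have "e \<notin> F n" for n using False by (simp add: F_def)
      ultimately show ?thesis
        unfolding P_def using ip_e_proj[OF B h Ffin FB e] by simp
    qed
    have l2: "(\<lambda>n. ip M e (P n)) \<longlonglongrightarrow> ip M e h" by (rule tendsto_eventually[OF ev])
    show ?thesis using LIMSEQ_unique[OF l1 l2] .
  qed
  have hG: "AE x in M. h x = G x"
  proof -
    have dL: "(\<lambda>x. h x - G x) \<in> L2 M" by (rule L2_diff[OF h GL])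
    have "ip M e (\<lambda>x. h x - G x) = 0" if e: "e \<in> B" for e
    proof -
      have eL: "e \<in> L2 M" using e BL by auto
      have "(\<lambda>x. h x - G x) = (\<lambda>x. (-1) * G x + h x)" by auto
      then show ?thesis using ip_lin2[OF eL GL h, of "-1"] ipG[OF e] by simp
    qed
    then have "ip M (\<lambda>x. h x - G x) (\<lambda>x. h x - G x) = 0"
      using onbD(4)[OF B dL] by blast
    then have "nrm2 M (\<lambda>x. h x - G x) = 0" by (simp add: ip_self)
    from nrm2_zero_AE[OF dL this] show ?thesis by auto
  qed
  have "(\<lambda>n. nrm2 M (\<lambda>x. h x - P n x)) \<longlonglongrightarrow> 0"
  proof -
    have "nrm2 M (\<lambda>x. h x - P n x) = nrm2 M (\<lambda>x. G x - P n x)" for n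
      using hG by (intro nrm2_AE L2_diff h GL PL) auto
    then show ?thesis using Gc by simp
  qed
  moreover have "nrm2 M (\<lambda>x. h x - P n x) = nrm2 M h - s n" for n
    unfolding P_def s_def w_def by (rule bessel_eq[OF B h Ffin FB])
  ultimately have "(\<lambda>n. nrm2 M h - (nrm2 M h - s n)) \<longlonglongrightarrow> nrm2 M h - 0"
    by (intro tendsto_diff tendsto_const) simp
  then have slim: "s \<longlonglongrightarrow> nrm2 M h" by simp
  have sS: "s n \<le> infsum w B" for n
  proof -
    have "s n = infsum w (F n)" unfolding s_def using Ffin by simp
    also have "\<dots> \<le> infsum w B"
      using Ffin FB wsum by (intro infsum_mono2) (auto simp: w_def)
    finally show ?thesis .
  qed
  have "infsum w B \<le> nrm2 M h"
    using wsum by (rule infsum_le_finite_sums) (auto simp: w_def intro: bessel_le[OF B h])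
  moreover have "nrm2 M h \<le> infsum w B"
    using slim sS by (intro LIMSEQ_le_const2) auto
  ultimately have "infsum w B = nrm2 M h" by simp
  then show ?thesis using wsum unfolding w_def by (simp add: has_sum_iff)
qed



lemma polar_scalar:
  "cnj a * b = (complex_of_real ((cmod (b + a))\<^sup>2) - complex_of_real ((cmod (-b + a))\<^sup>2)
     - \<i> * (complex_of_real ((cmod (\<i> * b + a))\<^sup>2) - complex_of_real ((cmod (-\<i> * b + a))\<^sup>2))) / 4"
  unfolding cmod_power2 by (simp add: complex_eq_iff power2_eq_square algebra_simps del: of_real_power)

lemma has_sum_diff':
  fixes f g :: "'a \<Rightarrow> complex"
  assumes "(f has_sum a) A" "(g has_sum b) A"
  shows "((\<lambda>x. f x - g x) has_sum (a - b)) A"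
proof -
  have "((\<lambda>x. - g x) has_sum (- b)) A" using assms(2) by (simp add: has_sum_uminus)
  from has_sum_add[OF assms(1) this] show ?thesis by simp
qed

lemma ip_quad:
  assumes "f \<in> L2 M" "g \<in> L2 M"
  shows "ip M (\<lambda>x. c * g x + f x) (\<lambda>x. c * g x + f x)
     = cnj c * (c * ip M g g + ip M g f) + (c * ip M f g + ip M f f)"
proof -
  have hL: "(\<lambda>x. c * g x + f x) \<in> L2 M" by (rule L2_lin[OF assms(2,1)])
  show ?thesis
    using ip_lin1[OF hL assms(2,1), of c] ip_lin2[OF assms(2) assms(2,1), of c] ip_lin2[OF assms(1) assms(2,1), of c]
    by simp
qed

lemma parseval_polar:
  assumes prob: "prob_space M" and B: "onb M B" and f: "f \<in> L2 M" and g: "g \<in> L2 M"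
  shows "((\<lambda>e. cnj (ip M e f) * ip M e g) has_sum ip M f g) B"
proof -
  define h where "h c = (\<lambda>x. c * g x + f x)" for c
  have hL: "h c \<in> L2 M" for c unfolding h_def by (rule L2_lin[OF g f])
  have ipeh: "ip M e (h c) = c * ip M e g + ip M e f" if "e \<in> B" for e c
    unfolding h_def using onbD(1)[OF B] that by (intro ip_lin2 g f) auto
  have PS: "((\<lambda>e. complex_of_real ((cmod (ip M e (h c)))\<^sup>2)) has_sum ip M (h c) (h c)) B" for c
    unfolding ip_self by (intro has_sum_of_real parseval[OF prob B hL])
  have "((\<lambda>e. (complex_of_real ((cmod (ip M e (h 1)))\<^sup>2) - complex_of_real ((cmod (ip M e (h (-1))))\<^sup>2)
     - \<i> * (complex_of_real ((cmod (ip M e (h \<i>)))\<^sup>2) - complex_of_real ((cmod (ip M e (h (-\<i>))))\<^sup>2))) / 4)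
     has_sum (ip M (h 1) (h 1) - ip M (h (-1)) (h (-1)) - \<i> * (ip M (h \<i>) (h \<i>) - ip M (h (-\<i>)) (h (-\<i>)))) / 4) B"
  proof -
    have "((\<lambda>e. (complex_of_real ((cmod (ip M e (h 1)))\<^sup>2) - complex_of_real ((cmod (ip M e (h (-1))))\<^sup>2)
     - \<i> * (complex_of_real ((cmod (ip M e (h \<i>)))\<^sup>2) - complex_of_real ((cmod (ip M e (h (-\<i>))))\<^sup>2))))
     has_sum (ip M (h 1) (h 1) - ip M (h (-1)) (h (-1)) - \<i> * (ip M (h \<i>) (h \<i>) - ip M (h (-\<i>)) (h (-\<i>))))) B"
      by (intro has_sum_diff' has_sum_cmult_right PS)
    from has_sum_cmult_left[OF this, of "1/4"] show ?thesis by simp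
  qed
  moreover have "(ip M (h 1) (h 1) - ip M (h (-1)) (h (-1)) - \<i> * (ip M (h \<i>) (h \<i>) - ip M (h (-\<i>)) (h (-\<i>)))) / 4 = ip M f g"
    unfolding h_def ip_quad[OF f g] by (simp add: algebra_simps)
  moreover have "(complex_of_real ((cmod (ip M e (h 1)))\<^sup>2) - complex_of_real ((cmod (ip M e (h (-1))))\<^sup>2)
     - \<i> * (complex_of_real ((cmod (ip M e (h \<i>)))\<^sup>2) - complex_of_real ((cmod (ip M e (h (-\<i>))))\<^sup>2))) / 4
     = cnj (ip M e f) * ip M e g" if "e \<in> B" for e
    unfolding ipeh[OF that] polar_scalar[of "ip M e f" "ip M e g"] by simp
  ultimately show ?thesis
    using has_sum_cong[of B "\<lambda>e. (complex_of_real ((cmod (ip M e (h 1)))\<^sup>2) - complex_of_real ((cmod (ip M e (h (-1))))\<^sup>2)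
     - \<i> * (complex_of_real ((cmod (ip M e (h \<i>)))\<^sup>2) - complex_of_real ((cmod (ip M e (h (-\<i>))))\<^sup>2))) / 4"
     "\<lambda>e. cnj (ip M e f) * ip M e g"] by simp
qed



context
  fixes M :: "'a measure" and \<rho> :: "('a \<Rightarrow> complex) \<Rightarrow> ('a \<Rightarrow> complex)"
  assumes prob: "prob_space M" and dens: "density_operator M \<rho>"
begin

lemma opL: "f \<in> L2 M \<Longrightarrow> \<rho> f \<in> L2 M"
  using dens unfolding density_operator_def is_operator_def by blast

lemma oplin: "f \<in> L2 M \<Longrightarrow> g \<in> L2 M \<Longrightarrow> AE x in M. \<rho> (\<lambda>y. c * f y + g y) x = c * \<rho> f x + \<rho> g x"
  using dens unfolding density_operator_def is_operator_def by blast

lemma opbound: "\<exists>K. \<forall>f\<in>L2 M. nrm2 M (\<rho> f) \<le> K * nrm2 M f"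
  using dens unfolding density_operator_def is_operator_def by (simp add: ip_self)

lemma oppos: "f \<in> L2 M \<Longrightarrow> ip M f (\<rho> f) \<in> \<real> \<and> 0 \<le> Re (ip M f (\<rho> f))"
  using dens unfolding density_operator_def positive_op_def by blast

lemma Blin2:
  assumes f: "f \<in> L2 M" and g: "g \<in> L2 M" and h: "h \<in> L2 M"
  shows "ip M f (\<rho> (\<lambda>x. c * g x + h x)) = c * ip M f (\<rho> g) + ip M f (\<rho> h)"
proof -
  have "ip M f (\<rho> (\<lambda>x. c * g x + h x)) = ip M f (\<lambda>x. c * \<rho> g x + \<rho> h x)"
    using oplin[OF g h, of c] by (intro ip_AE2 f opL L2_lin g h L2_lin) auto
  also have "\<dots> = c * ip M f (\<rho> g) + ip M f (\<rho> h)"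
    by (intro ip_lin2 f opL g h)
  finally show ?thesis .
qed

lemma Blin1:
  assumes f: "f \<in> L2 M" and g: "g \<in> L2 M" and h: "h \<in> L2 M"
  shows "ip M (\<lambda>x. c * g x + h x) (\<rho> f) = cnj c * ip M g (\<rho> f) + ip M h (\<rho> f)"
  by (intro ip_lin1 opL f g h)

lemma Bzero: "f \<in> L2 M \<Longrightarrow> ip M f (\<rho> (\<lambda>x. 0)) = 0"
  using Blin2[OF _ L2_zero L2_zero, of f 1] by simp

lemma Bherm:
  assumes f: "f \<in> L2 M" and g: "g \<in> L2 M"
  shows "ip M g (\<rho> f) = cnj (ip M f (\<rho> g))"
proof -
  define p where "p = ip M f (\<rho> g)"
  define q where "q = ip M g (\<rho> f)"
  have ex: "ip M (\<lambda>x. c * g x + f x) (\<rho> (\<lambda>x. c * g x + f x))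
      = cnj c * (c * ip M g (\<rho> g) + q) + (c * p + ip M f (\<rho> f))" for c
  proof -
    have hL: "(\<lambda>x. c * g x + f x) \<in> L2 M" by (rule L2_lin[OF g f])
    show ?thesis unfolding p_def q_def
      using Blin1[OF hL g f, of c] Blin2[OF g g f, of c] Blin2[OF f g f, of c] by simp
  qed
  have r: "Im (ip M u (\<rho> u)) = 0" if "u \<in> L2 M" for u
    using oppos[OF that] by (simp add: complex_is_Real_iff)
  have r1: "Im (cnj 1 * (1 * ip M g (\<rho> g) + q) + (1 * p + ip M f (\<rho> f))) = 0"
    using r[OF L2_lin[OF g f, of 1]] unfolding ex .
  have r2: "Im (cnj \<i> * (\<i> * ip M g (\<rho> g) + q) + (\<i> * p + ip M f (\<rho> f))) = 0"
    using r[OF L2_lin[OF g f, of \<i>]] unfolding ex .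
  have "Im q = - Im p" using r1 r[OF f] r[OF g] by simp
  moreover have "Re q = Re p" using r2 r[OF f] r[OF g] by simp
  ultimately show ?thesis unfolding p_def[symmetric] q_def[symmetric] by (simp add: complex_eq_iff)
qed

lemma B_CS:
  assumes f: "f \<in> L2 M" and g: "g \<in> L2 M"
  shows "(cmod (ip M f (\<rho> g)))\<^sup>2 \<le> Re (ip M f (\<rho> f)) * Re (ip M g (\<rho> g))"
proof (rule form_CS[where V="L2 M" and Bf="\<lambda>u v. ip M u (\<rho> v)"])
  show "\<And>f g. f \<in> L2 M \<Longrightarrow> g \<in> L2 M \<Longrightarrow> ip M g (\<rho> f) = cnj (ip M f (\<rho> g))" by (rule Bherm)
  show "\<And>f g h c. f \<in> L2 M \<Longrightarrow> g \<in> L2 M \<Longrightarrow> h \<in> L2 M \<Longrightarrow>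
      ip M f (\<rho> (\<lambda>x. c * g x + h x)) = c * ip M f (\<rho> g) + ip M f (\<rho> h)" by (rule Blin2)
  show "\<And>g h c. g \<in> L2 M \<Longrightarrow> h \<in> L2 M \<Longrightarrow> (\<lambda>x. c * g x + h x) \<in> L2 M" by (rule L2_lin)
  show "\<And>f. f \<in> L2 M \<Longrightarrow> 0 \<le> Re (ip M f (\<rho> f))" using oppos by blast
qed (use f g in auto)

end


context
  fixes M :: "'a measure" and \<rho> :: "('a \<Rightarrow> complex) \<Rightarrow> ('a \<Rightarrow> complex)"
  assumes prob: "prob_space M" and dens: "density_operator M \<rho>"
begin

lemma Q_le: 
  assumes f: "f \<in> L2 M"
  shows "Re (ip M f (\<rho> f)) \<le> nrm2 M f"
proof -
  obtain B0 where B0: "onb M B0" and sm: "(\<lambda>e. ip M e (\<rho> e)) summable_on B0"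
    and one: "infsum (\<lambda>e. ip M e (\<rho> e)) B0 = 1"
    using dens unfolding density_operator_def by blast
  have B0L: "B0 \<subseteq> L2 M" by (rule onbD(1)[OF B0])
  have hs: "((\<lambda>e. Re (ip M e (\<rho> e))) has_sum 1) B0"
    using has_sum_Re[OF has_sum_infsum[OF sm]] one by simp
  define a where "a = Re (ip M f (\<rho> f))"
  have a0: "0 \<le> a" unfolding a_def using oppos[OF prob dens f] by blast
  have k: "\<rho> f \<in> L2 M" by (rule opL[OF prob dens f])
  have P: "((\<lambda>e. (cmod (ip M e (\<rho> f)))\<^sup>2) has_sum nrm2 M (\<rho> f)) B0"
    by (rule parseval[OF prob B0 k])
  have hs2: "((\<lambda>e. a * Re (ip M e (\<rho> e))) has_sum a * 1) B0"
    by (rule has_sum_cmult_right[OF hs])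
  have nk: "nrm2 M (\<rho> f) \<le> a"
  proof -
    have "nrm2 M (\<rho> f) \<le> a * 1"
    proof (rule has_sum_mono[OF P hs2])
      fix e assume e: "e \<in> B0"
      then have eL: "e \<in> L2 M" using B0L by auto
      show "(cmod (ip M e (\<rho> f)))\<^sup>2 \<le> a * Re (ip M e (\<rho> e))"
        using B_CS[OF prob dens eL f] unfolding a_def by (simp add: mult.commute)
    qed
    then show ?thesis by simp
  qed
  have "a \<le> cmod (ip M f (\<rho> f))" unfolding a_def by (rule complex_Re_le_cmod)
  also have "\<dots> \<le> sqrt (nrm2 M f) * sqrt (nrm2 M (\<rho> f))" by (rule ip_CS[OF f k])
  also have "\<dots> \<le> sqrt (nrm2 M f) * sqrt a"
    using nk nrm2_nonneg[of M f] by (intro mult_left_mono) auto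
  finally have a1: "a \<le> sqrt (nrm2 M f) * sqrt a" .
  show ?thesis
  proof (cases "a = 0")
    case True then show ?thesis using nrm2_nonneg[of M f] unfolding a_def by simp
  next
    case False
    then have ap: "a > 0" using a0 by simp
    have sa: "sqrt a * sqrt a \<le> sqrt (nrm2 M f) * sqrt a"
      using a1 a0 by (simp only: real_sqrt_mult_self)
    have "sqrt a \<le> sqrt (nrm2 M f)" using mult_right_le_imp_le[OF sa] ap by simp
    then show ?thesis unfolding a_def[symmetric] by simp
  qed
qed

lemma mu_eq:
  assumes A: "A \<in> sets M"
  shows "mu_q M \<rho> A = ip M (indicator A) (\<rho> (indicator A))"
proof -
  let ?Bs = "SOME B. onb M B"
  have ex: "\<exists>B. onb M B" using dens unfolding density_operator_def by blast
  have Bs: "onb M ?Bs" using someI_ex[OF ex] .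
  have fm: "finite_measure M" using prob by (simp add: prob_space.finite_measure)
  have chi: "(indicator A :: 'a \<Rightarrow> complex) \<in> L2 M" by (rule L2_ind[OF fm A])
  have trm: "ip M e (\<rho> (qmu M A e)) = cnj (ip M e (indicator A)) * ip M e (\<rho> (indicator A))"
    if e: "e \<in> ?Bs" for e
  proof -
    have eL: "e \<in> L2 M" using e onbD(1)[OF Bs] by auto
    have int: "(LINT y:A|M. e y) = ip M (indicator A) e"
      unfolding set_lebesgue_integral_def ip_def
      by (intro Bochner_Integration.integral_cong) (auto simp: indicator_def)
    have q: "qmu M A e = (\<lambda>x. ip M (indicator A) e * indicator A x + 0)"
      unfolding qmu_def int by simp
    have "ip M e (\<rho> (qmu M A e)) = ip M (indicator A) e * ip M e (\<rho> (indicator A)) + ip M e (\<rho> (\<lambda>x. 0))"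
      unfolding q by (rule Blin2[OF prob dens eL chi L2_zero])
    also have "ip M e (\<rho> (\<lambda>x. 0)) = 0" by (rule Bzero[OF prob dens eL])
    also have "ip M (indicator A) e = cnj (ip M e (indicator A))" by (rule ip_cnj)
    finally show ?thesis by simp
  qed
  have "((\<lambda>e. cnj (ip M e (indicator A)) * ip M e (\<rho> (indicator A))) has_sum ip M (indicator A) (\<rho> (indicator A))) ?Bs"
    by (rule parseval_polar[OF prob Bs chi opL[OF prob dens chi]])
  then have "((\<lambda>e. ip M e ((\<rho> \<circ> qmu M A) e)) has_sum ip M (indicator A) (\<rho> (indicator A))) ?Bs"
    using has_sum_cong[of ?Bs "\<lambda>e. ip M e ((\<rho> \<circ> qmu M A) e)" "\<lambda>e. cnj (ip M e (indicator A)) * ip M e (\<rho> (indicator A))"] trm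
    by simp
  then show ?thesis unfolding mu_q_def trace_def by (simp add: has_sum_iff)
qed

end


lemma nrm2_ind_diff:
  assumes fm: "finite_measure M" and S: "S \<in> sets M" and T: "T \<in> sets M" and TS: "T \<subseteq> S"
  shows "nrm2 M (\<lambda>x. indicator S x - indicator T x) = measure M S - measure M T"
proof -
  have "(\<lambda>x. (cmod (indicator S x - indicator T x :: complex))\<^sup>2) = (\<lambda>x. indicator (S - T) x :: real)"
    using TS by (intro ext) (auto split: split_indicator)
  then have "nrm2 M (\<lambda>x. indicator S x - indicator T x) = measure M ((S - T) \<inter> space M)"
    unfolding nrm2_def by simp
  also have "(S - T) \<inter> space M = S - T" using S sets.sets_into_space by blast
  also have "measure M (S - T) = measure M S - measure M T"
    by (rule finite_measure.finite_measure_Diff[OF fm S T TS])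
  finally show ?thesis .
qed

lemma nrm2_ind:
  assumes fm: "finite_measure M" and S: "S \<in> sets M"
  shows "nrm2 M (indicator S) = measure M S"
  using nrm2_ind_diff[OF fm S sets.empty_sets] by simp

context
  fixes M :: "'a measure" and \<rho> :: "('a \<Rightarrow> complex) \<Rightarrow> ('a \<Rightarrow> complex)"
  assumes prob: "prob_space M" and dens: "density_operator M \<rho>"
begin

lemma Badd2:
  assumes "f \<in> L2 M" "u \<in> L2 M" "v \<in> L2 M"
  shows "ip M f (\<rho> (\<lambda>x. u x + v x)) = ip M f (\<rho> u) + ip M f (\<rho> v)"
  using Blin2[OF prob dens assms, of 1] by simp

lemma Badd1:
  assumes "f \<in> L2 M" "u \<in> L2 M" "v \<in> L2 M"
  shows "ip M (\<lambda>x. u x + v x) (\<rho> f) = ip M u (\<rho> f) + ip M v (\<rho> f)"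
  using Blin1[OF prob dens assms, of 1] by simp

lemma expand2:
  assumes u: "u \<in> L2 M" and v: "v \<in> L2 M"
  shows "ip M (\<lambda>x. u x + v x) (\<rho> (\<lambda>x. u x + v x))
    = ip M u (\<rho> u) + ip M u (\<rho> v) + ip M v (\<rho> u) + ip M v (\<rho> v)"
  using Badd1[OF L2_add[OF u v] u v] Badd2[OF u u v] Badd2[OF v u v] by simp

lemma expand3:
  assumes u: "u \<in> L2 M" and v: "v \<in> L2 M" and w: "w \<in> L2 M"
  shows "ip M (\<lambda>x. u x + v x + w x) (\<rho> (\<lambda>x. u x + v x + w x))
    = ip M u (\<rho> u) + ip M u (\<rho> v) + ip M v (\<rho> u) + ip M v (\<rho> v)
      + ip M u (\<rho> w) + ip M v (\<rho> w) + ip M w (\<rho> u) + ip M w (\<rho> v) + ip M w (\<rho> w)"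
proof -
  have uv: "(\<lambda>x. u x + v x) \<in> L2 M" by (rule L2_add[OF u v])
  have "ip M (\<lambda>x. u x + v x + w x) (\<rho> (\<lambda>x. u x + v x + w x))
     = ip M (\<lambda>x. u x + v x) (\<rho> (\<lambda>x. u x + v x)) + ip M (\<lambda>x. u x + v x) (\<rho> w)
       + ip M w (\<rho> (\<lambda>x. u x + v x)) + ip M w (\<rho> w)"
    using expand2[OF uv w] by simp
  also have "ip M (\<lambda>x. u x + v x) (\<rho> w) = ip M u (\<rho> w) + ip M v (\<rho> w)" by (rule Badd1[OF w u v])
  also have "ip M w (\<rho> (\<lambda>x. u x + v x)) = ip M w (\<rho> u) + ip M w (\<rho> v)" by (rule Badd2[OF w u v])
  finally show ?thesis unfolding expand2[OF u v] by (simp add: algebra_simps)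
qed

lemma cont:
  assumes S: "\<And>n. S n \<in> sets M" and T: "T \<in> sets M"
  and lim: "(\<lambda>n. nrm2 M (\<lambda>x. indicator (S n) x - indicator T x)) \<longlonglongrightarrow> 0"
  shows "(\<lambda>n. ip M (indicator (S n)) (\<rho> (indicator (S n)))) \<longlonglongrightarrow> ip M (indicator T) (\<rho> (indicator T))"
proof -
  have fm: "finite_measure M" using prob by (simp add: prob_space.finite_measure)
  obtain K where K: "\<And>f. f \<in> L2 M \<Longrightarrow> nrm2 M (\<rho> f) \<le> K * nrm2 M f"
    using opbound[OF prob dens] by blast
  define K' where "K' = max K 0"
  have K': "nrm2 M (\<rho> f) \<le> K' * nrm2 M f" if "f \<in> L2 M" for f
  proof -
    have "K * nrm2 M f \<le> K' * nrm2 M f"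
      unfolding K'_def using nrm2_nonneg[of M f] by (intro mult_right_mono) auto
    then show ?thesis using K[OF that] by simp
  qed
  have K'0: "0 \<le> K'" unfolding K'_def by simp
  have ind1: "nrm2 M (indicator X) \<le> 1" if "X \<in> sets M" for X
    using nrm2_ind[OF fm that] prob by (simp add: prob_space.prob_le_1)
  let ?c = "\<lambda>X. (indicator X :: 'a \<Rightarrow> complex)"
  have cL: "?c X \<in> L2 M" if "X \<in> sets M" for X by (rule L2_ind[OF fm that])
  define d where "d n = (\<lambda>x. ?c (S n) x - ?c T x)" for n
  have dL: "d n \<in> L2 M" for n unfolding d_def by (intro L2_diff cL S T)
  have dd: "d n = (\<lambda>x. (-1) * ?c T x + ?c (S n) x)" for n unfolding d_def by auto
  have split: "ip M (?c (S n)) (\<rho> (?c (S n))) - ip M (?c T) (\<rho> (?c T))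
      = ip M (d n) (\<rho> (?c (S n))) + ip M (?c T) (\<rho> (d n))" for n
  proof -
    have "ip M (d n) (\<rho> (?c (S n))) = - ip M (?c T) (\<rho> (?c (S n))) + ip M (?c (S n)) (\<rho> (?c (S n)))"
      unfolding dd using Blin1[OF prob dens cL[OF S] cL[OF T] cL[OF S], of "-1"] by simp
    moreover have "ip M (?c T) (\<rho> (d n)) = - ip M (?c T) (\<rho> (?c T)) + ip M (?c T) (\<rho> (?c (S n)))"
      unfolding dd using Blin2[OF prob dens cL[OF T] cL[OF T] cL[OF S], of "-1"] by simp
    ultimately show ?thesis by simp
  qed
  have bnd: "norm (ip M (?c (S n)) (\<rho> (?c (S n))) - ip M (?c T) (\<rho> (?c T)))
      \<le> 2 * sqrt K' * sqrt (nrm2 M (d n))" for n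
  proof -
    have b1: "cmod (ip M (d n) (\<rho> (?c (S n)))) \<le> sqrt K' * sqrt (nrm2 M (d n))"
    proof -
      have "cmod (ip M (d n) (\<rho> (?c (S n)))) \<le> sqrt (nrm2 M (d n)) * sqrt (nrm2 M (\<rho> (?c (S n))))"
        by (rule ip_CS[OF dL opL[OF prob dens cL[OF S]]])
      also have "nrm2 M (\<rho> (?c (S n))) \<le> K'"
        using K'[OF cL[OF S[of n]]] mult_left_mono[OF ind1[OF S[of n]] K'0] by linarith
      then have "sqrt (nrm2 M (\<rho> (?c (S n)))) \<le> sqrt K'" by simp
      then have "sqrt (nrm2 M (d n)) * sqrt (nrm2 M (\<rho> (?c (S n)))) \<le> sqrt (nrm2 M (d n)) * sqrt K'"
        using nrm2_nonneg[of M "d n"] by (intro mult_left_mono) auto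
      finally show ?thesis by (simp add: mult.commute)
    qed
    have b2: "cmod (ip M (?c T) (\<rho> (d n))) \<le> sqrt K' * sqrt (nrm2 M (d n))"
    proof -
      have "cmod (ip M (?c T) (\<rho> (d n))) \<le> sqrt (nrm2 M (?c T)) * sqrt (nrm2 M (\<rho> (d n)))"
        by (rule ip_CS[OF cL[OF T] opL[OF prob dens dL]])
      also have "\<dots> \<le> 1 * sqrt (K' * nrm2 M (d n))"
        using ind1[OF T] K'[OF dL[of n]] nrm2_nonneg[of M "?c T"] nrm2_nonneg[of M "\<rho> (d n)"]
        by (intro mult_mono) auto
      finally show ?thesis by (simp add: real_sqrt_mult)
    qed
    show ?thesis unfolding split using b1 b2 norm_triangle_ineq[of "ip M (d n) (\<rho> (?c (S n)))" "ip M (?c T) (\<rho> (d n))"]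
      by simp
  qed
  have "(\<lambda>n. 2 * sqrt K' * sqrt (nrm2 M (d n))) \<longlonglongrightarrow> 2 * sqrt K' * sqrt 0"
    using lim unfolding d_def by (intro tendsto_intros)
  then have "(\<lambda>n. ip M (?c (S n)) (\<rho> (?c (S n))) - ip M (?c T) (\<rho> (?c T))) \<longlonglongrightarrow> 0"
    by (intro Lim_null_comparison[OF always_eventually[OF allI[OF bnd]]]) simp
  then have "(\<lambda>n. ip M (?c (S n)) (\<rho> (?c (S n))) - ip M (?c T) (\<rho> (?c T)) + ip M (?c T) (\<rho> (?c T)))
      \<longlonglongrightarrow> 0 + ip M (?c T) (\<rho> (?c T))"
    by (intro tendsto_add tendsto_const)
  then show ?thesis by simp
qed

end

theorem mainTheorem6:
  fixes M :: "'a measure" and \<rho> :: "('a \<Rightarrow> complex) \<Rightarrow> ('a \<Rightarrow> complex)"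
  assumes "prob_space M" and "density_operator M \<rho>"
  shows "(\<forall>A\<in>sets M. mu_q M \<rho> A \<in> \<real> \<and> 0 \<le> Re (mu_q M \<rho> A) \<and> Re (mu_q M \<rho> A) \<le> measure M A)
    \<and> (\<forall>A\<in>sets M. \<forall>B\<in>sets M. \<forall>C\<in>sets M.
          A \<inter> B = {} \<and> A \<inter> C = {} \<and> B \<inter> C = {} \<longrightarrow>
          mu_q M \<rho> (A \<union> B \<union> C) = mu_q M \<rho> (A \<union> B) + mu_q M \<rho> (A \<union> C) + mu_q M \<rho> (B \<union> C)
             - mu_q M \<rho> A - mu_q M \<rho> B - mu_q M \<rho> C)
    \<and> (\<forall>A :: nat \<Rightarrow> 'a set. range A \<subseteq> sets M \<and> incseq A \<longrightarrow>
          (\<lambda>i. mu_q M \<rho> (A i)) \<longlonglongrightarrow> mu_q M \<rho> (\<Union>i. A i))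
    \<and> (\<forall>B :: nat \<Rightarrow> 'a set. range B \<subseteq> sets M \<and> decseq B \<longrightarrow>
          (\<lambda>i. mu_q M \<rho> (B i)) \<longlonglongrightarrow> mu_q M \<rho> (\<Inter>i. B i))"
proof -
  note prob = assms(1) and dens = assms(2)
  have fm: "finite_measure M" using prob by (simp add: prob_space.finite_measure)
  let ?c = "\<lambda>X. (indicator X :: 'a \<Rightarrow> complex)"
  have cL: "?c X \<in> L2 M" if "X \<in> sets M" for X by (rule L2_ind[OF fm that])
  have P1: "\<forall>A\<in>sets M. mu_q M \<rho> A \<in> \<real> \<and> 0 \<le> Re (mu_q M \<rho> A) \<and> Re (mu_q M \<rho> A) \<le> measure M A"
  proof
    fix A assume A: "A \<in> sets M"
    show "mu_q M \<rho> A \<in> \<real> \<and> 0 \<le> Re (mu_q M \<rho> A) \<and> Re (mu_q M \<rho> A) \<le> measure M A"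
      unfolding mu_eq[OF prob dens A]
      using oppos[OF prob dens cL[OF A]] Q_le[OF prob dens cL[OF A]] nrm2_ind[OF fm A] by simp
  qed
  have P2: "\<forall>A\<in>sets M. \<forall>B\<in>sets M. \<forall>C\<in>sets M.
          A \<inter> B = {} \<and> A \<inter> C = {} \<and> B \<inter> C = {} \<longrightarrow>
          mu_q M \<rho> (A \<union> B \<union> C) = mu_q M \<rho> (A \<union> B) + mu_q M \<rho> (A \<union> C) + mu_q M \<rho> (B \<union> C)
             - mu_q M \<rho> A - mu_q M \<rho> B - mu_q M \<rho> C"
  proof (intro ballI impI)
    fix A B C assume A: "A \<in> sets M" and B: "B \<in> sets M" and C: "C \<in> sets M"
      and dis: "A \<inter> B = {} \<and> A \<inter> C = {} \<and> B \<inter> C = {}"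
    have u2: "?c (X \<union> Y) = (\<lambda>x. ?c X x + ?c Y x)" if "X \<inter> Y = {}" for X Y
      using that by (intro ext) (auto split: split_indicator)
    have u3: "?c (A \<union> B \<union> C) = (\<lambda>x. ?c A x + ?c B x + ?c C x)"
      using dis by (intro ext) (auto split: split_indicator)
    have AB: "A \<union> B \<in> sets M" "A \<union> C \<in> sets M" "B \<union> C \<in> sets M" "A \<union> B \<union> C \<in> sets M"
      using A B C by auto
    show "mu_q M \<rho> (A \<union> B \<union> C) = mu_q M \<rho> (A \<union> B) + mu_q M \<rho> (A \<union> C) + mu_q M \<rho> (B \<union> C)
             - mu_q M \<rho> A - mu_q M \<rho> B - mu_q M \<rho> C"
    proof -
      have d1: "A \<inter> B = {}" "A \<inter> C = {}" "B \<inter> C = {}" using dis by auto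
      have e3: "ip M (?c (A \<union> B \<union> C)) (\<rho> (?c (A \<union> B \<union> C)))
        = ip M (?c A) (\<rho> (?c A)) + ip M (?c A) (\<rho> (?c B)) + ip M (?c B) (\<rho> (?c A)) + ip M (?c B) (\<rho> (?c B))
        + ip M (?c A) (\<rho> (?c C)) + ip M (?c B) (\<rho> (?c C)) + ip M (?c C) (\<rho> (?c A)) + ip M (?c C) (\<rho> (?c B)) + ip M (?c C) (\<rho> (?c C))"
        unfolding u3 by (rule expand3[OF prob dens cL[OF A] cL[OF B] cL[OF C]])
      have eAB: "ip M (?c (A \<union> B)) (\<rho> (?c (A \<union> B)))
        = ip M (?c A) (\<rho> (?c A)) + ip M (?c A) (\<rho> (?c B)) + ip M (?c B) (\<rho> (?c A)) + ip M (?c B) (\<rho> (?c B))"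
        unfolding u2[OF d1(1)] by (rule expand2[OF prob dens cL[OF A] cL[OF B]])
      have eAC: "ip M (?c (A \<union> C)) (\<rho> (?c (A \<union> C)))
        = ip M (?c A) (\<rho> (?c A)) + ip M (?c A) (\<rho> (?c C)) + ip M (?c C) (\<rho> (?c A)) + ip M (?c C) (\<rho> (?c C))"
        unfolding u2[OF d1(2)] by (rule expand2[OF prob dens cL[OF A] cL[OF C]])
      have eBC: "ip M (?c (B \<union> C)) (\<rho> (?c (B \<union> C)))
        = ip M (?c B) (\<rho> (?c B)) + ip M (?c B) (\<rho> (?c C)) + ip M (?c C) (\<rho> (?c B)) + ip M (?c C) (\<rho> (?c C))"
        unfolding u2[OF d1(3)] by (rule expand2[OF prob dens cL[OF B] cL[OF C]])
      show ?thesis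
        unfolding mu_eq[OF prob dens A] mu_eq[OF prob dens B] mu_eq[OF prob dens C]
          mu_eq[OF prob dens AB(1)] mu_eq[OF prob dens AB(2)] mu_eq[OF prob dens AB(3)] mu_eq[OF prob dens AB(4)]
          e3 eAB eAC eBC
        by (simp add: algebra_simps)
    qed
  qed
  have P3: "\<forall>A :: nat \<Rightarrow> 'a set. range A \<subseteq> sets M \<and> incseq A \<longrightarrow>
          (\<lambda>i. mu_q M \<rho> (A i)) \<longlonglongrightarrow> mu_q M \<rho> (\<Union>i. A i)"
  proof (intro allI impI)
    fix A :: "nat \<Rightarrow> 'a set" assume a: "range A \<subseteq> sets M \<and> incseq A"
    have An: "A n \<in> sets M" for n using a by auto
    have U: "(\<Union>i. A i) \<in> sets M" using a by auto
    have "(\<lambda>n. measure M (A n)) \<longlonglongrightarrow> measure M (\<Union>i. A i)"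
      using a by (intro Lim_measure_incseq) (auto simp: finite_measure.emeasure_finite[OF fm])
    then have "(\<lambda>n. measure M (\<Union>i. A i) - measure M (A n)) \<longlonglongrightarrow> measure M (\<Union>i. A i) - measure M (\<Union>i. A i)"
      by (intro tendsto_diff tendsto_const)
    moreover have "nrm2 M (\<lambda>x. ?c (A n) x - ?c (\<Union>i. A i) x) = measure M (\<Union>i. A i) - measure M (A n)" for n
      using nrm2_swap[of M "?c (A n)" "?c (\<Union>i. A i)"] nrm2_ind_diff[OF fm U An, of n] by auto
    ultimately have "(\<lambda>n. nrm2 M (\<lambda>x. ?c (A n) x - ?c (\<Union>i. A i) x)) \<longlonglongrightarrow> 0" by simp
    from cont[OF prob dens An U this]
    show "(\<lambda>i. mu_q M \<rho> (A i)) \<longlonglongrightarrow> mu_q M \<rho> (\<Union>i. A i)"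
      unfolding mu_eq[OF prob dens An] mu_eq[OF prob dens U] .
  qed
  have P4: "\<forall>B :: nat \<Rightarrow> 'a set. range B \<subseteq> sets M \<and> decseq B \<longrightarrow>
          (\<lambda>i. mu_q M \<rho> (B i)) \<longlonglongrightarrow> mu_q M \<rho> (\<Inter>i. B i)"
  proof (intro allI impI)
    fix B :: "nat \<Rightarrow> 'a set" assume a: "range B \<subseteq> sets M \<and> decseq B"
    have Bn: "B n \<in> sets M" for n using a by auto
    have I: "(\<Inter>i. B i) \<in> sets M" using a by auto
    have "(\<lambda>n. measure M (B n)) \<longlonglongrightarrow> measure M (\<Inter>i. B i)"
      using a by (intro finite_measure.finite_Lim_measure_decseq[OF fm]) auto
    then have "(\<lambda>n. measure M (B n) - measure M (\<Inter>i. B i)) \<longlonglongrightarrow> measure M (\<Inter>i. B i) - measure M (\<Inter>i. B i)"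
      by (intro tendsto_diff tendsto_const)
    moreover have "nrm2 M (\<lambda>x. ?c (B n) x - ?c (\<Inter>i. B i) x) = measure M (B n) - measure M (\<Inter>i. B i)" for n
      using nrm2_ind_diff[OF fm Bn I, of n] by auto
    ultimately have "(\<lambda>n. nrm2 M (\<lambda>x. ?c (B n) x - ?c (\<Inter>i. B i) x)) \<longlonglongrightarrow> 0" by simp
    from cont[OF prob dens Bn I this]
    show "(\<lambda>i. mu_q M \<rho> (B i)) \<longlonglongrightarrow> mu_q M \<rho> (\<Inter>i. B i)"
      unfolding mu_eq[OF prob dens Bn] mu_eq[OF prob dens I] .
  qed
  show ?thesis using P1 P2 P3 P4 by blast
qed


end
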